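(* Let $G$ be a bridgeless cubic graph, let $M_1,M_2,M_3$ be 1-factors of $G$, and let $G_c$ be the $k$-core of $G$ with respect to $M_1,M_2,M_3$, where $k$ is a positive integer. Then $|\overline{M_1}|_{odd}+|\overline{M_2}|_{odd}+|\overline{M_3}|_{odd}\leq 2k$. Moreover, if equality holds, then $G_c$ is a Petersen core.
   Context: Graphs may have multiple edges and loops. A 1-factor is a spanning 1-regular subgraph (identified with its edge set). For 1-factors $M_1,M_2,M_3$ of a cubic graph $G$, let $E_i$ ($i=0,1,2,3$) be the set of edges of $G$ lying in precisely $i$ of $M_1,M_2,M_3$ (counted as a list). The core $G_c$ with respect to $M_1,M_2,M_3$ is the subgraph of $G$ induced by the edge set $E_0\cup E_2\cup E_3$; it is a $k$-core if $|E_0|=k$. The core is cyclic if it is a union of pairwise vertex-disjoint circuits. $G_c$ is a Petersen core (with respect to $M_1,M_2,M_3$) if (1) $G_c$ is cyclic, and (2) for every path $P$ of length 5 in $G_c$ there do not exist two distinct edges $e_1,e_2$ of $P$ and indices $1\le i<j\le 3$ with $e_1,e_2\in M_i\cap M_j$. For a 1-factor $M$ of $G$, $\overline{M}$ denotes the complementary 2-factor $G-M$, and $|\overline{M}|_{odd}$ the number of its odd components (odd circuits). *)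

theory Defs
  imports Main "HOL-Library.Multiset"
begin

text \<open>A finite multigraph (multiple edges and loops allowed): vertex set V, edge set E,
  and an endpoint map assigning to each edge the multiset of its two ends
  (a loop at v has ends {#v,v#}).\<close>

definition multigraph :: "'v set \<Rightarrow> 'e set \<Rightarrow> ('e \<Rightarrow> 'v multiset) \<Rightarrow> bool" where
  "multigraph V E ends \<longleftrightarrow> finite V \<and> finite E \<and>
     (\<forall>e\<in>E. size (ends e) = 2 \<and> set_mset (ends e) \<subseteq> V)"

definition deg :: "('e \<Rightarrow> 'v multiset) \<Rightarrow> 'e set \<Rightarrow> 'v \<Rightarrow> nat" where
  "deg ends F v = (\<Sum>e\<in>F. count (ends e) v)"

definition cubic :: "'v set \<Rightarrow> 'e set \<Rightarrow> ('e \<Rightarrow> 'v multiset) \<Rightarrow> bool" where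
  "cubic V E ends \<longleftrightarrow> multigraph V E ends \<and> (\<forall>v\<in>V. deg ends E v = 3)"

definition reach :: "('e \<Rightarrow> 'v multiset) \<Rightarrow> 'e set \<Rightarrow> 'v \<Rightarrow> 'v \<Rightarrow> bool" where
  "reach ends F = (\<lambda>u v. \<exists>e\<in>F. ends e = {#u, v#})\<^sup>*\<^sup>*"

text \<open>A bridge is an edge whose deletion increases the number of components,
  i.e. its two ends are no longer connected after deleting it.\<close>
definition bridge :: "'e set \<Rightarrow> ('e \<Rightarrow> 'v multiset) \<Rightarrow> 'e \<Rightarrow> bool" where
  "bridge E ends e \<longleftrightarrow> e \<in> E \<and>
     (\<exists>u v. ends e = {#u, v#} \<and> \<not> reach ends (E - {e}) u v)"

definition bridgeless :: "'e set \<Rightarrow> ('e \<Rightarrow> 'v multiset) \<Rightarrow> bool" where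
  "bridgeless E ends \<longleftrightarrow> (\<forall>e\<in>E. \<not> bridge E ends e)"

text \<open>1-factor: spanning 1-regular subgraph, identified with its edge set.\<close>
definition one_factor :: "'v set \<Rightarrow> 'e set \<Rightarrow> ('e \<Rightarrow> 'v multiset) \<Rightarrow> 'e set \<Rightarrow> bool" where
  "one_factor V E ends M \<longleftrightarrow> M \<subseteq> E \<and> (\<forall>v\<in>V. deg ends M v = 1)"

definition components :: "'v set \<Rightarrow> ('e \<Rightarrow> 'v multiset) \<Rightarrow> 'e set \<Rightarrow> 'v set set" where
  "components V ends F = {{w\<in>V. reach ends F v w} | v. v \<in> V}"

text \<open>Number of odd components (odd circuits) of the complementary 2-factor G - M.
  A circuit is odd iff it has an odd number of vertices (= number of edges).\<close>
definition odd_comps :: "'v set \<Rightarrow> 'e set \<Rightarrow> ('e \<Rightarrow> 'v multiset) \<Rightarrow> 'e set \<Rightarrow> nat" where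
  "odd_comps V E ends M = card {C \<in> components V ends (E - M). odd (card C)}"

definition mult3 :: "'e set \<Rightarrow> 'e set \<Rightarrow> 'e set \<Rightarrow> 'e \<Rightarrow> nat" where
  "mult3 M1 M2 M3 e = (if e \<in> M1 then 1 else 0) + (if e \<in> M2 then 1 else 0) + (if e \<in> M3 then 1 else 0)"

definition Ei :: "'e set \<Rightarrow> 'e set \<Rightarrow> 'e set \<Rightarrow> 'e set \<Rightarrow> nat \<Rightarrow> 'e set" where
  "Ei E M1 M2 M3 i = {e \<in> E. mult3 M1 M2 M3 e = i}"

text \<open>Edge set of the core; the core is the subgraph induced by it.\<close>
definition core_edges :: "'e set \<Rightarrow> 'e set \<Rightarrow> 'e set \<Rightarrow> 'e set \<Rightarrow> 'e set" where
  "core_edges E M1 M2 M3 = Ei E M1 M2 M3 0 \<union> Ei E M1 M2 M3 2 \<union> Ei E M1 M2 M3 3"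

definition verts_of :: "('e \<Rightarrow> 'v multiset) \<Rightarrow> 'e set \<Rightarrow> 'v set" where
  "verts_of ends F = (\<Union>e\<in>F. set_mset (ends e))"

definition circuit :: "('e \<Rightarrow> 'v multiset) \<Rightarrow> 'e set \<Rightarrow> bool" where
  "circuit ends C \<longleftrightarrow> C \<noteq> {} \<and> finite C \<and>
     (\<forall>v\<in>verts_of ends C. deg ends C v = 2) \<and>
     (\<forall>u\<in>verts_of ends C. \<forall>v\<in>verts_of ends C. reach ends C u v)"

definition cyclic :: "('e \<Rightarrow> 'v multiset) \<Rightarrow> 'e set \<Rightarrow> bool" where
  "cyclic ends F \<longleftrightarrow> (\<exists>\<C>. (\<forall>C\<in>\<C>. circuit ends C) \<and> \<Union>\<C> = F \<and>
     (\<forall>C\<in>\<C>. \<forall>D\<in>\<C>. C \<noteq> D \<longrightarrow> verts_of ends C \<inter> verts_of ends D = {}))"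

definition is_path :: "('e \<Rightarrow> 'v multiset) \<Rightarrow> 'e set \<Rightarrow> nat \<Rightarrow> 'v list \<Rightarrow> 'e list \<Rightarrow> bool" where
  "is_path ends F n vs es \<longleftrightarrow> length es = n \<and> length vs = Suc n \<and> distinct vs \<and>
     (\<forall>i<n. es ! i \<in> F \<and> ends (es ! i) = {#vs ! i, vs ! Suc i#})"

definition petersen_core :: "'e set \<Rightarrow> ('e \<Rightarrow> 'v multiset) \<Rightarrow> 'e set \<Rightarrow> 'e set \<Rightarrow> 'e set \<Rightarrow> bool" where
  "petersen_core E ends M1 M2 M3 \<longleftrightarrow>
     (let Ec = core_edges E M1 M2 M3 in
      cyclic ends Ec \<and>
      (\<forall>vs es. is_path ends Ec 5 vs es \<longrightarrow>
         \<not> (\<exists>e1\<in>set es. \<exists>e2\<in>set es. e1 \<noteq> e2 \<and>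
              (\<exists>(A, B)\<in>{(M1, M2), (M1, M3), (M2, M3)}. e1 \<in> A \<inter> B \<and> e2 \<in> A \<inter> B))))"

end

theory Submission
  imports Defs
begin



lemma reach_edge: "e \<in> F \<Longrightarrow> ends e = {#u, v#} \<Longrightarrow> reach ends F u v"
  unfolding reach_def by (rule r_into_rtranclp) blast

lemma reach_refl: "reach ends F u u" unfolding reach_def by simp

lemma reach_trans: "reach ends F u v \<Longrightarrow> reach ends F v w \<Longrightarrow> reach ends F u w"
  unfolding reach_def by (rule rtranclp_trans)

lemma reach_sym: "reach ends F u v \<Longrightarrow> reach ends F v u"
  unfolding reach_def
proof (induction rule: rtranclp_induct)
  case base thus ?case by simp
next
  case (step y z)
  then obtain e where "e \<in> F" "ends e = {#z, y#}" by (auto simp: add_mset_commute)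
  hence "(\<lambda>u v. \<exists>e\<in>F. ends e = {#u, v#})\<^sup>*\<^sup>* z y" by blast
  thus ?case using step.IH by (rule rtranclp_trans)
qed

lemma reach_mono: "F \<subseteq> F' \<Longrightarrow> reach ends F u v \<Longrightarrow> reach ends F' u v"
  unfolding reach_def by (erule rtranclp_mono[THEN predicate2D, rotated]) blast

lemma size_eq_sum_count_V:
  assumes "finite V" "set_mset M \<subseteq> V"
  shows "(\<Sum>v\<in>V. count M v) = size M"
  using assms
proof (induction M)
  case empty thus ?case by simp
next
  case (add x M)
  have "(\<Sum>v\<in>V. count (add_mset x M) v) = (\<Sum>v\<in>V. count M v + (if v = x then 1 else 0))"
    by (rule sum.cong) auto
  also have "\<dots> = (\<Sum>v\<in>V. count M v) + 1" using add.prems by (simp add: sum.distrib)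
  finally show ?case using add by simp
qed




definition cls :: "'v set \<Rightarrow> ('e \<Rightarrow> 'v multiset) \<Rightarrow> 'e set \<Rightarrow> 'v \<Rightarrow> 'v set" where
  "cls V ends F v = {w\<in>V. reach ends F v w}"

lemma comp_iff: "C \<in> components V ends F \<longleftrightarrow> (\<exists>v\<in>V. C = cls V ends F v)"
  unfolding components_def cls_def by blast

lemma cls_self: "v \<in> V \<Longrightarrow> v \<in> cls V ends F v"
  unfolding cls_def using reach_refl by fast

lemma cls_eq: "u \<in> cls V ends F v \<Longrightarrow> cls V ends F u = cls V ends F v"
proof -
  assume "u \<in> cls V ends F v"
  hence r: "reach ends F v u" unfolding cls_def by simp
  show ?thesis unfolding cls_def
  proof (intro Collect_cong conj_cong refl iffI)
    fix w assume "reach ends F u w" thus "reach ends F v w" using r reach_trans by fast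
  next
    fix w assume "reach ends F v w" thus "reach ends F u w" using r reach_trans reach_sym by fast
  qed
qed

lemma comp_eq: "C \<in> components V ends F \<Longrightarrow> u \<in> C \<Longrightarrow> C = cls V ends F u"
proof -
  assume "C \<in> components V ends F" "u \<in> C"
  then obtain v where "C = cls V ends F v" unfolding comp_iff by blast
  thus ?thesis using cls_eq \<open>u \<in> C\<close> by metis
qed

lemma comp_sub: "C \<in> components V ends F \<Longrightarrow> C \<subseteq> V"
  unfolding comp_iff cls_def by blast

lemma comp_reach: "C \<in> components V ends F \<Longrightarrow> u \<in> C \<Longrightarrow> w \<in> V \<Longrightarrow> reach ends F u w \<Longrightarrow> w \<in> C"
proof -
  assume a: "C \<in> components V ends F" "u \<in> C" "w \<in> V" "reach ends F u w"
  hence "C = cls V ends F u" using comp_eq[of C V ends F u] by simp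
  thus ?thesis using a unfolding cls_def by blast
qed

lemma comps_finite: "finite V \<Longrightarrow> finite (components V ends F)"
  unfolding components_def by (simp add: setcompr_eq_image)

lemma comps_sum:
  assumes "finite V"
  shows "(\<Sum>C\<in>components V ends F. \<Sum>u\<in>C. g u) = (\<Sum>u\<in>V. g u)"
proof -
  have U: "\<Union>(components V ends F) = V"
  proof
    show "\<Union>(components V ends F) \<subseteq> V" using comp_sub by (metis Union_least)
    show "V \<subseteq> \<Union>(components V ends F)"
    proof
      fix v assume "v \<in> V"
      hence "cls V ends F v \<in> components V ends F" "v \<in> cls V ends F v"
        using cls_self[of v V ends F] by (auto simp: comp_iff)
      thus "v \<in> \<Union>(components V ends F)" by blast
    qed
  qed
  have fin: "\<forall>C\<in>components V ends F. finite C" using comp_sub assms finite_subset by metis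
  have dis: "\<forall>A\<in>components V ends F. \<forall>B\<in>components V ends F. A \<noteq> B \<longrightarrow> A \<inter> B = {}"
  proof (intro ballI impI)
    fix A B assume A: "A \<in> components V ends F" and B: "B \<in> components V ends F" and "A \<noteq> B"
    show "A \<inter> B = {}"
    proof (rule ccontr)
      assume "A \<inter> B \<noteq> {}"
      then obtain u where "u \<in> A" "u \<in> B" by blast
      hence "A = cls V ends F u" "B = cls V ends F u" using comp_eq[OF A, of u] comp_eq[OF B, of u] by blast+
      thus False using \<open>A \<noteq> B\<close> by simp
    qed
  qed
  have "(\<Sum>u\<in>\<Union>(components V ends F). g u) = (\<Sum>C\<in>components V ends F. \<Sum>u\<in>C. g u)"
    using sum.Union_disjoint[OF fin dis] by simp
  thus ?thesis unfolding U by (rule sym)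
qed

lemma handshake:
  assumes "finite V" "finite F" "\<forall>e\<in>F. size (ends e) = 2 \<and> set_mset (ends e) \<subseteq> V"
  shows "(\<Sum>v\<in>V. deg ends F v) = 2 * card F"
proof -
  have "(\<Sum>v\<in>V. deg ends F v) = (\<Sum>e\<in>F. \<Sum>v\<in>V. count (ends e) v)"
    unfolding deg_def by (rule sum.swap)
  also have "\<dots> = (\<Sum>e\<in>F. 2)"
    using assms by (intro sum.cong) (auto simp: size_eq_sum_count_V)
  finally show ?thesis by simp
qed




lemma size2_pair: "size M = 2 \<Longrightarrow> \<exists>a b. M = {#a, b#}"
proof -
  assume "size M = 2"
  then obtain a N where "M = add_mset a N" using size_eq_Suc_imp_eq_union[of M 1] by auto
  moreover have "size N = 1" using \<open>size M = 2\<close> calculation by simp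
  then obtain b where "N = {#b#}" using size_1_singleton_mset by blast
  ultimately show ?thesis by blast
qed

locale G3 =
  fixes V :: "'v set" and E :: "'e set" and ends :: "'e \<Rightarrow> 'v multiset" and M1 M2 M3 :: "'e set"
  assumes cub: "cubic V E ends" and bl: "bridgeless E ends"
    and f1: "one_factor V E ends M1" and f2: "one_factor V E ends M2" and f3: "one_factor V E ends M3"
begin

lemma finV: "finite V" using cub unfolding cubic_def multigraph_def by blast
lemma finE: "finite E" using cub unfolding cubic_def multigraph_def by blast
lemma ends2: "e \<in> E \<Longrightarrow> size (ends e) = 2" using cub unfolding cubic_def multigraph_def by blast
lemma endsV: "e \<in> E \<Longrightarrow> set_mset (ends e) \<subseteq> V" using cub unfolding cubic_def multigraph_def by blast
lemma deg3: "v \<in> V \<Longrightarrow> deg ends E v = 3" using cub unfolding cubic_def by blast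

definition Mf :: "nat \<Rightarrow> 'e set" where
  "Mf i = (if i = 0 then M1 else if i = 1 then M2 else M3)"

lemma Mf_fac: "one_factor V E ends (Mf i)" unfolding Mf_def using f1 f2 f3 by auto
lemma Mf_sub: "Mf i \<subseteq> E" using Mf_fac unfolding one_factor_def by blast
lemma Mf_deg: "v \<in> V \<Longrightarrow> deg ends (Mf i) v = 1" using Mf_fac unfolding one_factor_def by blast

lemma ends_pair: "e \<in> E \<Longrightarrow> \<exists>a b. ends e = {#a, b#}" using ends2 size2_pair by blast

lemma sum_count_split:
  assumes "finite F" "x \<in> F"
  shows "(\<Sum>e\<in>F. count (ends e) v) = count (ends x) v + (\<Sum>e\<in>F-{x}. count (ends e) v)"
  using assms by (simp add: sum.remove)

lemma no_loop: assumes "e \<in> E" "ends e = {#a, b#}" shows "a \<noteq> b"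
proof
  assume "a = b"
  hence ee: "ends e = {#a, a#}" using assms by simp
  have aV: "a \<in> V" using endsV[OF assms(1)] ee by simp
  have ce: "count (ends e) a = 2" using ee by simp
  have "deg ends E a = 3" using deg3[OF aV] .
  hence s1: "(\<Sum>e'\<in>E-{e}. count (ends e') a) = 1"
    using sum_count_split[OF finE assms(1), of a] ce unfolding deg_def by simp
  have M1d: "(\<Sum>e'\<in>M1. count (ends e') a) = 1"
    using Mf_deg[OF aV, of 0] unfolding deg_def Mf_def by simp
  have M1E: "M1 \<subseteq> E" using Mf_sub[of 0] unfolding Mf_def by simp
  have finM1: "finite M1" using M1E finE finite_subset by blast
  have "e \<notin> M1"
  proof
    assume "e \<in> M1"
    hence "count (ends e) a \<le> (\<Sum>e'\<in>M1. count (ends e') a)"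
      using finM1 by (intro member_le_sum) auto
    thus False using ce M1d by simp
  qed
  obtain g where g: "g \<in> M1" "count (ends g) a \<noteq> 0"
  proof -
    assume h: "\<And>g. g \<in> M1 \<Longrightarrow> count (ends g) a \<noteq> 0 \<Longrightarrow> thesis"
    show thesis
    proof (rule ccontr)
      assume "\<not> thesis"
      hence "\<forall>g\<in>M1. count (ends g) a = 0" using h by blast
      hence "(\<Sum>e'\<in>M1. count (ends e') a) = 0" by simp
      thus False using M1d by simp
    qed
  qed
  have gE: "g \<in> E - {e}" using g M1E \<open>e \<notin> M1\<close> by blast
  have others: "\<And>e'. e' \<in> E - {e} \<Longrightarrow> e' \<noteq> g \<Longrightarrow> count (ends e') a = 0"
  proof -
    fix e' assume "e' \<in> E - {e}" "e' \<noteq> g"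
    have "(\<Sum>x\<in>{g, e'}. count (ends x) a) \<le> (\<Sum>x\<in>E-{e}. count (ends x) a)"
      using finE gE \<open>e' \<in> E - {e}\<close> by (intro sum_mono2) auto
    hence "count (ends g) a + count (ends e') a \<le> 1" using s1 \<open>e' \<noteq> g\<close> by simp
    moreover have "count (ends g) a \<ge> 1" using g(2) by linarith
    ultimately show "count (ends e') a = 0" by linarith
  qed
  have cg: "count (ends g) a = 1"
  proof -
    have "count (ends g) a \<le> (\<Sum>x\<in>E-{e}. count (ends x) a)"
      using finE gE by (intro member_le_sum) auto
    moreover have "count (ends g) a \<ge> 1" using g(2) by linarith
    ultimately show ?thesis using s1 by linarith
  qed
  obtain c d where cd: "ends g = {#c, d#}" using ends_pair gE by blast
  have cgc: "count (ends g) a = 1" using cg .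
  obtain w where gw: "ends g = {#a, w#}" and "w \<noteq> a"
  proof -
    assume h: "\<And>w. ends g = {#a, w#} \<Longrightarrow> w \<noteq> a \<Longrightarrow> thesis"
    have "c \<noteq> d" proof assume "c = d" thus False using cgc cd by (auto split: if_splits) qed
    have "a \<in># ends g" using g(2) by (simp add: not_in_iff)
    hence "a = c \<or> a = d" using cd by simp
    thus thesis
    proof
      assume "a = c" thus thesis using h[of d] cd \<open>c \<noteq> d\<close> by blast
    next
      assume "a = d" thus thesis using h[of c] cd \<open>c \<noteq> d\<close> by (simp add: add_mset_commute)
    qed
  qed
  have stay: "reach ends (E - {g}) a x \<Longrightarrow> x = a" for x
    unfolding reach_def
  proof (induction rule: rtranclp_induct)
    case base thus ?case by simp
  next
    case (step y z)
    then obtain e' where e': "e' \<in> E - {g}" "ends e' = {#y, z#}" by blast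
    hence ya: "y = a" using step.IH by simp
    have "count (ends e') a \<noteq> 0" using e'(2) ya by simp
    have "e' = e"
    proof (rule ccontr)
      assume "e' \<noteq> e"
      hence h1: "e' \<in> E - {e}" and h2: "e' \<noteq> g" using e'(1) by auto
      show False using others[OF h1 h2] \<open>count (ends e') a \<noteq> 0\<close> by simp
    qed
    hence "{#a, z#} = {#a, a#}" using e'(2) ee ya by simp
    thus ?case by simp
  qed
  have "\<not> reach ends (E - {g}) a w" using stay \<open>w \<noteq> a\<close> by metis
  hence "bridge E ends g"
    unfolding bridge_def using gE gw by blast
  thus False using bl gE unfolding bridgeless_def by blast
qed

lemma count_ends: "e \<in> E \<Longrightarrow> count (ends e) v = (if v \<in># ends e then 1 else 0)"
proof -
  assume "e \<in> E"
  then obtain a b where ab: "ends e = {#a, b#}" using ends_pair by blast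
  hence "a \<noteq> b" using no_loop \<open>e \<in> E\<close> by blast
  thus ?thesis using ab by auto
qed

lemma deg_card: "F \<subseteq> E \<Longrightarrow> deg ends F v = card {e\<in>F. v \<in># ends e}"
proof -
  assume F: "F \<subseteq> E"
  have fin: "finite F" using F finE finite_subset by blast
  have "deg ends F v = (\<Sum>e\<in>F. if v \<in># ends e then 1 else 0)"
    unfolding deg_def using F count_ends by (intro sum.cong) auto
  also have "\<dots> = card {e\<in>F. v \<in># ends e}" using fin by (simp add: sum.If_cases Int_def)
  finally show ?thesis .
qed

end



lemma lt3: "(i::nat) < 3 \<Longrightarrow> i = 0 \<or> i = 1 \<or> i = 2" by arith

lemma sum3: "(\<Sum>i<(3::nat). f i) = f 0 + f 1 + (f 2 :: nat)"
  by (simp add: numeral_3_eq_3 lessThan_Suc numeral_2_eq_2)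

lemma sum_two_le:
  assumes "finite C" "u \<in> C" "x \<in> C" "u \<noteq> x"
  shows "f u + f x \<le> (\<Sum>y\<in>C. f y :: nat)"
proof -
  have "(\<Sum>y\<in>{u,x}. f y) \<le> (\<Sum>y\<in>C. f y)" using assms by (intro sum_mono2) auto
  thus ?thesis using assms by simp
qed

lemma sum_three_le:
  assumes "finite C" "u \<in> C" "x \<in> C" "y \<in> C" "u \<noteq> x" "u \<noteq> y" "x \<noteq> y"
  shows "f u + f x + f y \<le> (\<Sum>z\<in>C. f z :: nat)"
proof -
  have "(\<Sum>z\<in>{u,x,y}. f z) \<le> (\<Sum>z\<in>C. f z)" using assms by (intro sum_mono2) auto
  thus ?thesis using assms by simp
qed

context G3 begin

definition inc :: "'v \<Rightarrow> 'e set" where "inc v = {e\<in>E. v \<in># ends e}"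

lemma card_inc: "v \<in> V \<Longrightarrow> card (inc v) = 3"
  using deg3 deg_card[of E v] unfolding inc_def by simp

lemma fin_inc: "finite (inc v)" unfolding inc_def using finE by simp

definition m :: "nat \<Rightarrow> 'v \<Rightarrow> 'e" where
  "m i v = (THE e. e \<in> Mf i \<and> v \<in># ends e)"

lemma m_props:
  assumes "v \<in> V"
  shows "m i v \<in> Mf i" "v \<in># ends (m i v)" "\<And>e. e \<in> Mf i \<Longrightarrow> v \<in># ends e \<Longrightarrow> e = m i v"
proof -
  have "card {e\<in>Mf i. v \<in># ends e} = 1" using Mf_deg[OF assms] deg_card[OF Mf_sub] by simp
  then obtain e1 where e1: "{e\<in>Mf i. v \<in># ends e} = {e1}" using card_1_singletonE by blast
  have "\<And>e. (e \<in> Mf i \<and> v \<in># ends e) = (e = e1)" using e1[unfolded set_eq_iff] by simp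
  hence ex: "\<exists>!e. e \<in> Mf i \<and> v \<in># ends e" by simp
  have th: "m i v \<in> Mf i \<and> v \<in># ends (m i v)" unfolding m_def using theI'[OF ex] .
  thus "m i v \<in> Mf i" "v \<in># ends (m i v)" by auto
  show "\<And>e. e \<in> Mf i \<Longrightarrow> v \<in># ends e \<Longrightarrow> e = m i v" using ex th by blast
qed

lemma m_inc: "v \<in> V \<Longrightarrow> m i v \<in> inc v"
proof -
  assume v: "v \<in> V"
  have "m i v \<in> E" using m_props(1)[OF v] Mf_sub by blast
  thus ?thesis using m_props(2)[OF v] unfolding inc_def by blast
qed

definition Z :: "'e set" where "Z = {e\<in>E. \<forall>i<3. e \<notin> Mf i}"

lemma Z_eq: "Ei E M1 M2 M3 0 = Z"
  unfolding Ei_def Z_def mult3_def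
proof (intro Collect_cong conj_cong refl)
  fix e
  show "((if e \<in> M1 then 1 else 0) + (if e \<in> M2 then 1 else 0) + (if e \<in> M3 then 1 else 0) = (0::nat))
    = (\<forall>i<3. e \<notin> Mf i)"
  proof
    assume "(if e \<in> M1 then 1 else 0) + (if e \<in> M2 then 1 else 0) + (if e \<in> M3 then 1 else 0) = (0::nat)"
    hence "e \<notin> M1" "e \<notin> M2" "e \<notin> M3" by (auto split: if_splits)
    thus "\<forall>i<3. e \<notin> Mf i" unfolding Mf_def by (auto dest: lt3)
  next
    assume "\<forall>i<3. e \<notin> Mf i"
    hence "e \<notin> Mf 0" "e \<notin> Mf 1" "e \<notin> Mf 2" by auto
    thus "(if e \<in> M1 then 1 else 0) + (if e \<in> M2 then 1 else 0) + (if e \<in> M3 then 1 else 0) = (0::nat)"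
      unfolding Mf_def by simp
  qed
qed

lemma Z_sub: "Z \<subseteq> E" unfolding Z_def by blast

definition e0 :: "'v \<Rightarrow> nat" where "e0 v = card {e\<in>Z. v \<in># ends e}"

lemma e0_deg: "e0 v = deg ends Z v" unfolding e0_def using deg_card[OF Z_sub] by simp

lemma Zv_eq: "v \<in> V \<Longrightarrow> {e\<in>Z. v \<in># ends e} = inc v - {m 0 v, m 1 v, m 2 v}"
proof -
  assume v: "v \<in> V"
  show ?thesis
  proof
    show "{e\<in>Z. v \<in># ends e} \<subseteq> inc v - {m 0 v, m 1 v, m 2 v}"
    proof
      fix e assume "e \<in> {e\<in>Z. v \<in># ends e}"
      hence e: "e \<in> E" "\<forall>i<3. e \<notin> Mf i" "v \<in># ends e" unfolding Z_def by auto
      have "m 0 v \<in> Mf 0" "m 1 v \<in> Mf 1" "m 2 v \<in> Mf 2" using m_props[OF v] by auto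
      hence "e \<noteq> m 0 v" "e \<noteq> m 1 v" "e \<noteq> m 2 v" using e(2) by auto
      thus "e \<in> inc v - {m 0 v, m 1 v, m 2 v}" using e unfolding inc_def by auto
    qed
    show "inc v - {m 0 v, m 1 v, m 2 v} \<subseteq> {e\<in>Z. v \<in># ends e}"
    proof
      fix e assume a: "e \<in> inc v - {m 0 v, m 1 v, m 2 v}"
      hence e: "e \<in> E" "v \<in># ends e" unfolding inc_def by auto
      have "\<forall>i<3. e \<notin> Mf i"
      proof (intro allI impI)
        fix i :: nat assume "i < 3"
        show "e \<notin> Mf i"
        proof
          assume "e \<in> Mf i"
          hence "e = m i v" using m_props(3)[OF v] e(2) by blast
          thus False using a \<open>i<3\<close> by (auto dest: lt3)
        qed
      qed
      thus "e \<in> {e\<in>Z. v \<in># ends e}" using e unfolding Z_def by auto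
    qed
  qed
qed

lemma e0_card: "v \<in> V \<Longrightarrow> e0 v = 3 - card {m 0 v, m 1 v, m 2 v}"
proof -
  assume v: "v \<in> V"
  have "{m 0 v, m 1 v, m 2 v} \<subseteq> inc v" using m_inc[OF v] by auto
  hence "card (inc v - {m 0 v, m 1 v, m 2 v}) = card (inc v) - card {m 0 v, m 1 v, m 2 v}"
    using fin_inc by (intro card_Diff_subset) (auto intro: finite_subset)
  thus ?thesis unfolding e0_def Zv_eq[OF v] card_inc[OF v] .
qed

definition triple :: "'v \<Rightarrow> bool" where "triple v \<longleftrightarrow> (\<forall>i<3. \<forall>j<3. m i v = m j v)"
definition rel :: "nat \<Rightarrow> 'v \<Rightarrow> bool" where "rel i v \<longleftrightarrow> (\<exists>j<3. j \<noteq> i \<and> m i v = m j v)"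
definition nbrel :: "nat \<Rightarrow> 'v \<Rightarrow> bool" where
  "nbrel i v \<longleftrightarrow> (\<exists>e\<in>Z. v \<in># ends e \<and> (\<exists>x. x \<noteq> v \<and> x \<in># ends e \<and> rel i x))"
definition beta :: "nat \<Rightarrow> 'v \<Rightarrow> nat" where
  "beta i v = (if triple v then (if nbrel i v then 1 else 2) else (if rel i v then 1 else 0))"

lemma triple_iff: "triple v \<longleftrightarrow> m 0 v = m 1 v \<and> m 1 v = m 2 v"
  unfolding triple_def by (auto dest!: lt3)

lemma card_m3_le: "card {m 0 v, m 1 v, m 2 v} \<le> 3" by (rule card_insert_le_m1) (auto simp: card_insert_if)

lemma triple_e0: "v \<in> V \<Longrightarrow> triple v \<Longrightarrow> e0 v = 2"
  using e0_card by (simp add: triple_iff)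

lemma nontriple_e0: "v \<in> V \<Longrightarrow> \<not> triple v \<Longrightarrow> e0 v \<le> 1"
proof -
  assume v: "v \<in> V" "\<not> triple v"
  hence "card {m 0 v, m 1 v, m 2 v} \<ge> 2" unfolding triple_iff by (auto simp: card_insert_if)
  thus ?thesis using e0_card[OF v(1)] by simp
qed

lemma distinct_e0: "v \<in> V \<Longrightarrow> m 0 v \<noteq> m 1 v \<Longrightarrow> m 0 v \<noteq> m 2 v \<Longrightarrow> m 1 v \<noteq> m 2 v \<Longrightarrow> e0 v = 0"
  using e0_card by simp

lemma Z_pair: "v \<in> V \<Longrightarrow> e \<in> Z \<Longrightarrow> v \<in># ends e \<Longrightarrow> \<exists>a<3. \<exists>b<3. a \<noteq> b \<and> m a v = m b v"
proof (rule ccontr)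
  assume v: "v \<in> V" "e \<in> Z" "v \<in># ends e" and n: "\<not> (\<exists>a<3. \<exists>b<3. a \<noteq> b \<and> m a v = m b v)"
  have nn: "\<forall>a<3. \<forall>b<3. a \<noteq> b \<longrightarrow> m a v \<noteq> m b v" using n by blast
  have "m 0 v \<noteq> m 1 v" using nn[rule_format, of 0 1] by simp
  moreover have "m 0 v \<noteq> m 2 v" using nn[rule_format, of 0 2] by simp
  moreover have "m 1 v \<noteq> m 2 v" using nn[rule_format, of 1 2] by simp
  ultimately have "e0 v = 0" using distinct_e0 v(1) by simp
  moreover have "e \<in> {e\<in>Z. v \<in># ends e}" using v by simp
  moreover have "finite {e\<in>Z. v \<in># ends e}" using finE Z_sub by (auto intro: finite_subset)
  ultimately show False unfolding e0_def by auto
qed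

lemma triple_rel: "triple v \<Longrightarrow> i < 3 \<Longrightarrow> rel i v"
proof -
  assume t: "triple v" "i < 3"
  have "\<exists>j<3. j \<noteq> i"
  proof (cases "i = 0")
    case True thus ?thesis by (intro exI[of _ 1]) simp
  next
    case False thus ?thesis by (intro exI[of _ 0]) simp
  qed
  then obtain j where "j < 3" "j \<noteq> i" by blast
  thus ?thesis unfolding rel_def using t unfolding triple_def by blast
qed

lemma rel_beta: "rel i v \<Longrightarrow> beta i v \<ge> 1" unfolding beta_def by auto

lemma other_end: "e \<in> E \<Longrightarrow> v \<in># ends e \<Longrightarrow> \<exists>x. x \<noteq> v \<and> ends e = {#v, x#}"
proof -
  assume e: "e \<in> E" "v \<in># ends e"
  then obtain a b where ab: "ends e = {#a, b#}" using ends_pair by blast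
  have "a \<noteq> b" using no_loop[OF e(1) ab] .
  show ?thesis
  proof (cases "v = a")
    case True thus ?thesis using ab \<open>a\<noteq>b\<close> by (intro exI[of _ b]) simp
  next
    case False hence "v = b" using e(2) ab by simp
    thus ?thesis using ab \<open>a\<noteq>b\<close> by (intro exI[of _ a]) (simp add: add_mset_commute)
  qed
qed

end



context G3 begin

definition comps :: "nat \<Rightarrow> 'v set set" where "comps i = components V ends (E - Mf i)"
definition aC :: "nat \<Rightarrow> 'v set \<Rightarrow> nat" where
  "aC i C = card {j. j < 3 \<and> j \<noteq> i \<and> (\<exists>u\<in>C. m i u = m j u)}"

lemma Z_notM: "e \<in> Z \<Longrightarrow> e \<notin> Mf i"
proof -
  assume "e \<in> Z"
  hence "e \<notin> Mf 0" "e \<notin> Mf 1" "e \<notin> Mf 2" unfolding Z_def by auto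
  moreover have "Mf i = Mf 0 \<or> Mf i = Mf 1 \<or> Mf i = Mf 2" unfolding Mf_def by auto
  ultimately show "e \<notin> Mf i" by auto
qed

lemma comp_finite: "C \<in> comps i \<Longrightarrow> finite C"
  unfolding comps_def using comp_sub finV finite_subset by metis

lemma comp_subV: "C \<in> comps i \<Longrightarrow> C \<subseteq> V"
  unfolding comps_def using comp_sub by metis

lemma comp_edge: "C \<in> comps i \<Longrightarrow> u \<in> C \<Longrightarrow> e \<in> E \<Longrightarrow> e \<notin> Mf i \<Longrightarrow> ends e = {#u, x#} \<Longrightarrow> x \<in> C"
proof -
  assume a: "C \<in> comps i" "u \<in> C" "e \<in> E" "e \<notin> Mf i" "ends e = {#u, x#}"
  have "reach ends (E - Mf i) u x" using a by (intro reach_edge[of e]) auto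
  moreover have "x \<in> V" using endsV[OF a(3)] a(5) by simp
  ultimately show "x \<in> C" using comp_reach[of C V ends "E - Mf i" u x] a(1,2) unfolding comps_def by blast
qed

lemma cls_comp: "v \<in> V \<Longrightarrow> cls V ends (E - Mf i) v \<in> comps i"
  unfolding comps_def comp_iff by blast

lemma pair_enum: "(a::nat) < 3 \<Longrightarrow> b < 3 \<Longrightarrow> a \<noteq> b \<Longrightarrow>
   (a = 0 \<and> b = 1) \<or> (a = 1 \<and> b = 0) \<or> (a = 0 \<and> b = 2) \<or> (a = 2 \<and> b = 0) \<or> (a = 1 \<and> b = 2) \<or> (a = 2 \<and> b = 1)"
  by arith

lemma triple_of:
  assumes "a < 3" "b < 3" "l < 3" "a \<noteq> b" "a \<noteq> l" "b \<noteq> l" "m a v = m b v" "m a v = m l v"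
  shows "triple v"
proof -
  have l: "l = 3 - a - b" using assms(1-6) by arith
  show ?thesis unfolding triple_iff using pair_enum[OF assms(1,2,4)] assms(7,8) unfolding l
    by (auto simp: numeral_2_eq_2 numeral_3_eq_3)
qed

lemma third: "(a::nat) < 3 \<Longrightarrow> b < 3 \<Longrightarrow> a \<noteq> b \<Longrightarrow> 3 - a - b < 3 \<and> 3 - a - b \<noteq> a \<and> 3 - a - b \<noteq> b"
  by arith

lemma third_any: "(a::nat) < 3 \<Longrightarrow> b < 3 \<Longrightarrow> a \<noteq> b \<Longrightarrow> j < 3 \<Longrightarrow> j = a \<or> j = b \<or> j = 3 - a - b"
  by arith

lemma not_rel_third:
  assumes "\<not> triple v" "a < 3" "b < 3" "a \<noteq> b" "m a v = m b v"
  shows "\<not> rel (3 - a - b) v"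
proof
  assume "rel (3 - a - b) v"
  then obtain j where j: "j < 3" "j \<noteq> 3 - a - b" "m (3 - a - b) v = m j v" unfolding rel_def by blast
  have "j = a \<or> j = b" using third_any[OF assms(2-4) j(1)] j(2) by blast
  hence "m a v = m (3 - a - b) v" using j(3) assms(5) by auto
  moreover have t: "3 - a - b < 3" "a \<noteq> 3 - a - b" "b \<noteq> 3 - a - b" using third[OF assms(2-4)] by auto
  ultimately have "triple v" using triple_of[OF assms(2,3) t(1) assms(4) t(2,3) assms(5)] by simp
  thus False using assms(1) by simp
qed

lemma pair_card: "(a::nat) < 3 \<Longrightarrow> b < 3 \<Longrightarrow> a \<noteq> b \<Longrightarrow> m a v = m b v \<Longrightarrow> card {m 0 v, m 1 v, m 2 v} \<le> 2"
proof -
  assume h: "a < 3" "b < 3" "a \<noteq> b" "m a v = m b v"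
  have c: "\<And>x y z. card {x, y, z} \<le> (2::nat) \<longleftrightarrow> x = y \<or> x = z \<or> y = z" by (auto simp: card_insert_if)
  show ?thesis unfolding c using pair_enum[OF h(1-3)] h(4) by auto
qed

lemma vertex_bound: "v \<in> V \<Longrightarrow> (\<Sum>i<3. beta i v) \<le> 2 * e0 v"
proof -
  assume v: "v \<in> V"
  show ?thesis
  proof (cases "triple v")
    case True
    have e02: "e0 v = 2" using triple_e0[OF v True] .
    hence "{e\<in>Z. v \<in># ends e} \<noteq> {}" unfolding e0_def by (metis card.empty zero_neq_numeral)
    then obtain e where e: "e \<in> Z" "v \<in># ends e" by blast
    have eE: "e \<in> E" using e Z_sub by blast
    obtain x where x: "x \<noteq> v" "ends e = {#v, x#}" using other_end[OF eE e(2)] by blast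
    have xV: "x \<in> V" using endsV[OF eE] x by simp
    obtain a b where ab: "a < 3" "b < 3" "a \<noteq> b" "m a x = m b x"
      using Z_pair[OF xV e(1)] x(2) by auto
    have "rel a x" unfolding rel_def using ab by blast
    hence na: "nbrel a v" unfolding nbrel_def using e x by (intro bexI[OF _ e(1)]) auto
    have "rel b x" unfolding rel_def using ab by metis
    hence nb: "nbrel b v" unfolding nbrel_def using e x by (intro bexI[OF _ e(1)]) auto
    have ba: "beta a v = 1" "beta b v = 1" using na nb True unfolding beta_def by auto
    have le2: "\<And>i. beta i v \<le> 2" unfolding beta_def by auto
    have "beta 0 v + beta 1 v + beta 2 v \<le> 4"
      using pair_enum[OF ab(1-3)] ba le2[of 0] le2[of 1] le2[of 2] by auto
    thus ?thesis unfolding sum3 e02 by simp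
  next
    case False
    hence bdef: "\<And>i. beta i v = (if rel i v then 1 else 0)" unfolding beta_def by simp
    show ?thesis
    proof (cases "\<exists>a<3. \<exists>b<3. a \<noteq> b \<and> m a v = m b v")
      case True
      then obtain a b where ab: "a < 3" "b < 3" "a \<noteq> b" "m a v = m b v" by blast
      have "e0 v \<ge> 1" using pair_card[OF ab] e0_card[OF v] by simp
      have nr: "\<not> rel (3 - a - b) v" using not_rel_third[OF False ab] .
      have "beta 0 v + beta 1 v + beta 2 v \<le> 2"
        using pair_enum[OF ab(1-3)] nr bdef[of 0] bdef[of 1] bdef[of 2] by auto
      thus ?thesis unfolding sum3 using \<open>e0 v \<ge> 1\<close> by simp
    next
      case False
      have nr: "\<And>i. i < 3 \<Longrightarrow> \<not> rel i v"
      proof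
        fix i :: nat assume "i < 3" "rel i v"
        then obtain j where "j < 3" "j \<noteq> i" "m i v = m j v" unfolding rel_def by blast
        thus False using False \<open>i < 3\<close> by metis
      qed
      have "beta 0 v = 0" "beta 1 v = 0" "beta 2 v = 0" using bdef nr by auto
      thus ?thesis unfolding sum3 by simp
    qed
  qed
qed

end



context G3 begin

lemma J_card_le: "(i::nat) < 3 \<Longrightarrow> card {j. j < 3 \<and> j \<noteq> i \<and> P j} \<le> 2"
proof -
  assume "i < 3"
  have "{j. j < 3 \<and> j \<noteq> i \<and> P j} \<subseteq> {..<3} - {i}" by auto
  hence "card {j. j < 3 \<and> j \<noteq> i \<and> P j} \<le> card ({..<3::nat} - {i})" by (intro card_mono) auto
  also have "\<dots> = 2" using \<open>i<3\<close> by simp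
  finally show ?thesis .
qed

lemma J_card_full: "(i::nat) < 3 \<Longrightarrow> (\<And>j. j < 3 \<Longrightarrow> j \<noteq> i \<Longrightarrow> P j) \<Longrightarrow> card {j. j < 3 \<and> j \<noteq> i \<and> P j} = 2"
proof -
  assume "i < 3" "\<And>j. j < 3 \<Longrightarrow> j \<noteq> i \<Longrightarrow> P j"
  hence "{j. j < 3 \<and> j \<noteq> i \<and> P j} = {..<3} - {i}" by auto
  thus ?thesis using \<open>i<3\<close> by simp
qed

lemma aC_le2: "i < 3 \<Longrightarrow> aC i C \<le> 2" unfolding aC_def by (rule J_card_le)

lemma beta_le2: "beta i v \<le> 2" unfolding beta_def by auto

lemma comp_bound:
  assumes i: "i < 3" and C: "C \<in> comps i"
  shows "aC i C \<le> (\<Sum>u\<in>C. beta i u)"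
proof -
  define J where "J = {j. j < 3 \<and> j \<noteq> i \<and> (\<exists>u\<in>C. m i u = m j u)}"
  have aJ: "aC i C = card J" unfolding aC_def J_def ..
  have cJ: "card J \<le> 2" unfolding J_def using J_card_le[OF i] .
  have finC: "finite C" using comp_finite[OF C] .
  have CV: "C \<subseteq> V" using comp_subV[OF C] .
  show ?thesis
  proof (cases "J = {}")
    case True thus ?thesis using aJ by simp
  next
    case False
    then obtain j u where j: "j < 3" "j \<noteq> i" "u \<in> C" "m i u = m j u" unfolding J_def by blast
    have "rel i u" unfolding rel_def using j by blast
    hence bu: "beta i u \<ge> 1" by (rule rel_beta)
    have su: "beta i u \<le> (\<Sum>u\<in>C. beta i u)" using finC j(3) by (intro member_le_sum) auto
    show ?thesis
    proof (cases "\<forall>j'\<in>J. j' = j")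
      case True
      hence "J \<subseteq> {j}" by blast
      hence "card J \<le> 1" using card_mono[of "{j}" J] by simp
      thus ?thesis using aJ bu su by simp
    next
      case False
      then obtain j' u' where j': "j' < 3" "j' \<noteq> i" "j' \<noteq> j" "u' \<in> C" "m i u' = m j' u'" unfolding J_def by blast
      show ?thesis
      proof (cases "u' = u")
        case False
        have "rel i u'" unfolding rel_def using j' by blast
        hence "beta i u' \<ge> 1" by (rule rel_beta)
        moreover have "beta i u + beta i u' \<le> (\<Sum>u\<in>C. beta i u)" using sum_two_le[OF finC j(3) j'(4)] False by simp
        ultimately show ?thesis using aJ cJ bu by simp
      next
        case True
        have tu: "triple u" using triple_of[OF i j(1) j'(1) j(2)[symmetric] j'(2)[symmetric] j'(3)[symmetric]] j(4) j'(5) True by simp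
        show ?thesis
        proof (cases "nbrel i u")
          case False
          hence "beta i u = 2" using tu unfolding beta_def by simp
          thus ?thesis using su aJ cJ by simp
        next
          case True
          then obtain e x where ex: "e \<in> Z" "u \<in># ends e" "x \<noteq> u" "x \<in># ends e" "rel i x" unfolding nbrel_def by blast
          have eE: "e \<in> E" using ex Z_sub by blast
          obtain y where y: "y \<noteq> u" "ends e = {#u, y#}" using other_end[OF eE ex(2)] by blast
          have "x = y" using ex(3,4) y(2) by simp
          hence "x \<in> C" using comp_edge[OF C j(3) eE Z_notM[OF ex(1)]] y(2) by simp
          have "beta i x \<ge> 1" using rel_beta[OF ex(5)] .
          moreover have "beta i u + beta i x \<le> (\<Sum>u\<in>C. beta i u)" using sum_two_le[OF finC j(3) \<open>x \<in> C\<close>] ex(3) by simp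
          ultimately show ?thesis using aJ cJ bu by simp
        qed
      qed
    qed
  qed
qed

lemma odd_witness:
  assumes i: "i < 3" and j: "j < 3" "j \<noteq> i" and C: "C \<in> comps i" and odd: "odd (card C)"
  shows "\<exists>u\<in>C. m i u = m j u"
proof (rule ccontr)
  assume n: "\<not> (\<exists>u\<in>C. m i u = m j u)"
  define F where "F = {e \<in> Mf j. set_mset (ends e) \<subseteq> C}"
  have finC: "finite C" using comp_finite[OF C] .
  have CV: "C \<subseteq> V" using comp_subV[OF C] .
  have FE: "F \<subseteq> E" unfolding F_def using Mf_sub by blast
  have finF: "finite F" using FE finE finite_subset by blast
  have mF: "m j u \<in> F" if u: "u \<in> C" for u
  proof -
    have uV: "u \<in> V" using u CV by blast
    have mj: "m j u \<in> Mf j" "u \<in># ends (m j u)" using m_props[OF uV] by auto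
    have mE: "m j u \<in> E" using mj Mf_sub by blast
    have "m j u \<notin> Mf i"
    proof
      assume "m j u \<in> Mf i"
      hence "m j u = m i u" using m_props(3)[OF uV] mj(2) by blast
      thus False using n u by auto
    qed
    obtain x where x: "x \<noteq> u" "ends (m j u) = {#u, x#}" using other_end[OF mE mj(2)] by blast
    have "x \<in> C" using comp_edge[OF C u mE \<open>m j u \<notin> Mf i\<close> x(2)] .
    hence "set_mset (ends (m j u)) \<subseteq> C" using x(2) u by simp
    thus ?thesis unfolding F_def using mj by blast
  qed
  have d1: "deg ends F u = 1" if u: "u \<in> C" for u
  proof -
    have uV: "u \<in> V" using u CV by blast
    have finM: "finite (Mf j)" using Mf_sub[of j] finE by (rule finite_subset)
    have "deg ends F u \<le> deg ends (Mf j) u"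
      unfolding deg_def using finM by (intro sum_mono2) (auto simp: F_def)
    hence le: "deg ends F u \<le> 1" using Mf_deg[OF uV] by simp
    have "count (ends (m j u)) u \<le> deg ends F u"
      unfolding deg_def using finF mF[OF u] by (intro member_le_sum) auto
    moreover have "count (ends (m j u)) u \<ge> 1" using m_props(2)[OF uV] by simp
    ultimately show ?thesis using le by linarith
  qed
  have "(\<Sum>u\<in>C. deg ends F u) = 2 * card F"
    using handshake[OF finC finF] FE ends2 unfolding F_def by blast
  moreover have "(\<Sum>u\<in>C. deg ends F u) = card C" using d1 by simp
  ultimately show False using odd by simp
qed

end



context G3 begin

lemma pair_rel:
  assumes "a < 3" "b < 3" "a \<noteq> b" "m a x = m b x" "\<not> rel i0 x" "i0 < 3" "j < 3" "j \<noteq> i0"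
  shows "rel j x"
proof -
  have "i0 \<noteq> a"
  proof assume "i0 = a" hence "rel i0 x" unfolding rel_def using assms(2-4) by blast
    thus False using assms(5) by simp qed
  moreover have "i0 \<noteq> b"
  proof assume "i0 = b" hence "rel i0 x" unfolding rel_def using assms(1,3,4) by metis
    thus False using assms(5) by simp qed
  ultimately have "i0 = 3 - a - b" using third_any[OF assms(1-3) assms(6)] by blast
  hence "j = a \<or> j = b" using third_any[OF assms(1-3) assms(7)] assms(8) by blast
  thus ?thesis
  proof
    assume "j = a" thus ?thesis unfolding rel_def using assms(2-4) by blast
  next
    assume "j = b" thus ?thesis unfolding rel_def using assms(1,3,4) by metis
  qed
qed

lemma triple_strict:
  assumes v: "v \<in> V" and t: "triple v"
  shows "(\<Sum>i<3. beta i v) < 2 * e0 v \<or> (\<exists>i<3. \<exists>C\<in>comps i. aC i C < (\<Sum>u\<in>C. beta i u))"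
proof (cases "\<forall>i<3. nbrel i v")
  case True
  hence "beta 0 v = 1" "beta 1 v = 1" "beta 2 v = 1" using t unfolding beta_def by auto
  thus ?thesis unfolding sum3 triple_e0[OF v t] by simp
next
  case False
  then obtain i0 where i0: "i0 < 3" "\<not> nbrel i0 v" by blast
  have "card {e\<in>Z. v \<in># ends e} = 2" using triple_e0[OF v t] unfolding e0_def .
  then obtain e1 e2 where e12: "{e\<in>Z. v \<in># ends e} = {e1, e2}" "e1 \<noteq> e2" by (auto simp: card_2_iff)
  have e1: "e1 \<in> Z" "v \<in># ends e1" and e2: "e2 \<in> Z" "v \<in># ends e2" using e12(1) by blast+
  have e1E: "e1 \<in> E" and e2E: "e2 \<in> E" using e1 e2 Z_sub by blast+
  obtain x where x: "x \<noteq> v" "ends e1 = {#v, x#}" using other_end[OF e1E e1(2)] by blast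
  obtain y where y: "y \<noteq> v" "ends e2 = {#v, y#}" using other_end[OF e2E e2(2)] by blast
  have xV: "x \<in> V" using endsV[OF e1E] x by simp
  have yV: "y \<in> V" using endsV[OF e2E] y by simp
  have nx: "\<not> rel i0 x"
  proof
    assume "rel i0 x"
    hence "nbrel i0 v" unfolding nbrel_def using e1 x by (intro bexI[OF _ e1(1)]) auto
    thus False using i0 by simp
  qed
  have ny: "\<not> rel i0 y"
  proof
    assume "rel i0 y"
    hence "nbrel i0 v" unfolding nbrel_def using e2 y by (intro bexI[OF _ e2(1)]) auto
    thus False using i0 by simp
  qed
  define j where "j = (if i0 = 0 then 1 else 0 :: nat)"
  have j: "j < 3" "j \<noteq> i0" unfolding j_def by auto
  obtain a b where ab: "a < 3" "b < 3" "a \<noteq> b" "m a x = m b x" using Z_pair[OF xV e1(1)] x(2) by auto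
  have rx: "rel j x" using pair_rel[OF ab nx i0(1) j] .
  obtain a' b' where ab': "a' < 3" "b' < 3" "a' \<noteq> b'" "m a' y = m b' y" using Z_pair[OF yV e2(1)] y(2) by auto
  have ry: "rel j y" using pair_rel[OF ab' ny i0(1) j] .
  have xy: "x \<noteq> y"
  proof
    assume "x = y"
    have "{e1, e2} \<subseteq> {e\<in>Z. x \<in># ends e}" using e1 e2 x y \<open>x = y\<close> by auto
    moreover have "finite {e\<in>Z. x \<in># ends e}" using finE Z_sub by (auto intro: finite_subset)
    ultimately have "card {e1, e2} \<le> e0 x" unfolding e0_def by (rule card_mono[rotated])
    hence "e0 x \<ge> 2" using e12(2) by simp
    hence "triple x" using nontriple_e0[OF xV] by fastforce
    hence "rel i0 x" using triple_rel i0(1) by blast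
    thus False using nx by simp
  qed
  define C where "C = cls V ends (E - Mf j) v"
  have C: "C \<in> comps j" unfolding C_def using cls_comp[OF v] .
  have vC: "v \<in> C" unfolding C_def using cls_self[OF v] .
  have xC: "x \<in> C" using comp_edge[OF C vC e1E Z_notM[OF e1(1)] x(2)] .
  have yC: "y \<in> C" using comp_edge[OF C vC e2E Z_notM[OF e2(1)] y(2)] .
  have "beta j v + beta j x + beta j y \<le> (\<Sum>u\<in>C. beta j u)"
    using sum_three_le[OF comp_finite[OF C] vC xC yC] x(1) y(1) xy by auto
  moreover have "beta j v \<ge> 1" using rel_beta triple_rel[OF t j(1)] by blast
  moreover have "beta j x \<ge> 1" "beta j y \<ge> 1" using rel_beta rx ry by blast+
  moreover have "aC j C \<le> 2" using aC_le2[OF j(1)] .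
  ultimately have "aC j C < (\<Sum>u\<in>C. beta j u)" by linarith
  thus ?thesis using j(1) C by blast
qed

lemma double_strict:
  assumes nt: "\<forall>w\<in>V. \<not> triple w" and ij: "i < 3" "j < 3" "i \<noteq> j" and C: "C \<in> comps i"
    and uw: "u \<in> C" "w \<in> C" "u \<noteq> w" "m i u = m j u" "m i w = m j w"
  shows "aC i C < (\<Sum>y\<in>C. beta i y)"
proof -
  have CV: "C \<subseteq> V" using comp_subV[OF C] .
  have finC: "finite C" using comp_finite[OF C] .
  have l: "3 - i - j < 3" "i \<noteq> 3 - i - j" "j \<noteq> 3 - i - j" using third[OF ij] by auto
  have bu: "beta i u \<ge> 1" using rel_beta uw(4) ij unfolding rel_def by metis
  have bw: "beta i w \<ge> 1" using rel_beta uw(5) ij unfolding rel_def by metis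
  show ?thesis
  proof (cases "\<exists>z\<in>C. m i z = m (3 - i - j) z")
    case True
    then obtain z where z: "z \<in> C" "m i z = m (3 - i - j) z" by blast
    have "z \<noteq> u"
    proof assume "z = u"
      hence "triple u" using triple_of[OF ij(1,2) l(1) ij(3) l(2,3)] uw(4) z(2) by simp
      thus False using nt uw(1) CV by blast qed
    moreover have "z \<noteq> w"
    proof assume "z = w"
      hence "triple w" using triple_of[OF ij(1,2) l(1) ij(3) l(2,3)] uw(5) z(2) by simp
      thus False using nt uw(2) CV by blast qed
    ultimately have "beta i u + beta i w + beta i z \<le> (\<Sum>y\<in>C. beta i y)"
      using sum_three_le[OF finC uw(1,2) z(1) uw(3)] by auto
    moreover have "beta i z \<ge> 1" using rel_beta z(2) l unfolding rel_def by metis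
    moreover have "aC i C \<le> 2" using aC_le2[OF ij(1)] .
    ultimately show ?thesis using bu bw by linarith
  next
    case False
    have "{j'. j' < 3 \<and> j' \<noteq> i \<and> (\<exists>u\<in>C. m i u = m j' u)} \<subseteq> {j}"
    proof
      fix j' assume "j' \<in> {j'. j' < 3 \<and> j' \<noteq> i \<and> (\<exists>u\<in>C. m i u = m j' u)}"
      hence j': "j' < 3" "j' \<noteq> i" "\<exists>u\<in>C. m i u = m j' u" by auto
      have "j' = i \<or> j' = j \<or> j' = 3 - i - j" using third_any[OF ij j'(1)] .
      moreover have "j' \<noteq> 3 - i - j" using j'(3) False by metis
      ultimately show "j' \<in> {j}" using j'(2) by simp
    qed
    hence "aC i C \<le> 1" unfolding aC_def using card_mono[of "{j}"] by fastforce
    moreover have "beta i u + beta i w \<le> (\<Sum>y\<in>C. beta i y)" using sum_two_le[OF finC uw(1,2,3)] .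
    ultimately show ?thesis using bu bw by linarith
  qed
qed

end



context G3 begin

definition oddc :: "nat \<Rightarrow> nat" where "oddc i = card {C\<in>comps i. odd (card C)}"

lemma comps_fin: "finite (comps i)" unfolding comps_def using comps_finite[OF finV] .

lemma G1: "i < 3 \<Longrightarrow> 2 * oddc i \<le> (\<Sum>C\<in>comps i. aC i C)"
proof -
  assume i: "i < 3"
  let ?O = "{C\<in>comps i. odd (card C)}"
  have "\<And>C. C \<in> ?O \<Longrightarrow> aC i C = 2"
  proof -
    fix C assume "C \<in> ?O"
    hence C: "C \<in> comps i" "odd (card C)" by auto
    show "aC i C = 2" unfolding aC_def
      by (rule J_card_full[OF i]) (use odd_witness[OF i _ _ C] in blast)
  qed
  hence "(\<Sum>C\<in>?O. aC i C) = 2 * card ?O" by simp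
  moreover have "(\<Sum>C\<in>?O. aC i C) \<le> (\<Sum>C\<in>comps i. aC i C)"
    using comps_fin by (intro sum_mono2) auto
  ultimately show ?thesis unfolding oddc_def by simp
qed

lemma G2: "i < 3 \<Longrightarrow> (\<Sum>C\<in>comps i. aC i C) \<le> (\<Sum>u\<in>V. beta i u)"
proof -
  assume i: "i < 3"
  have "(\<Sum>C\<in>comps i. aC i C) \<le> (\<Sum>C\<in>comps i. \<Sum>u\<in>C. beta i u)"
    using comp_bound[OF i] by (intro sum_mono) auto
  also have "\<dots> = (\<Sum>u\<in>V. beta i u)" unfolding comps_def by (rule comps_sum[OF finV])
  finally show ?thesis .
qed

lemma G2s: "i < 3 \<Longrightarrow> C \<in> comps i \<Longrightarrow> aC i C < (\<Sum>u\<in>C. beta i u) \<Longrightarrow> (\<Sum>C\<in>comps i. aC i C) < (\<Sum>u\<in>V. beta i u)"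
proof -
  assume i: "i < 3" and C: "C \<in> comps i" "aC i C < (\<Sum>u\<in>C. beta i u)"
  have "(\<Sum>C\<in>comps i. aC i C) < (\<Sum>C\<in>comps i. \<Sum>u\<in>C. beta i u)"
    using comp_bound[OF i] C comps_fin by (intro sum_strict_mono_ex1) auto
  also have "\<dots> = (\<Sum>u\<in>V. beta i u)" unfolding comps_def by (rule comps_sum[OF finV])
  finally show ?thesis .
qed

lemma sum_e0: "(\<Sum>u\<in>V. e0 u) = 2 * card Z"
proof -
  have "(\<Sum>u\<in>V. e0 u) = (\<Sum>u\<in>V. deg ends Z u)" using e0_deg by simp
  also have "\<dots> = 2 * card Z"
    using handshake[OF finV] Z_sub finE finite_subset ends2 endsV by (metis subsetD)
  finally show ?thesis .
qed

lemma G3: "(\<Sum>i<3. \<Sum>u\<in>V. beta i u) \<le> 4 * card Z"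
proof -
  have "(\<Sum>i<3. \<Sum>u\<in>V. beta i u) = (\<Sum>u\<in>V. \<Sum>i<3. beta i u)" by (rule sum.swap)
  also have "\<dots> \<le> (\<Sum>u\<in>V. 2 * e0 u)" using vertex_bound by (intro sum_mono) auto
  also have "\<dots> = 4 * card Z" using sum_e0 by (simp add: sum_distrib_left[symmetric])
  finally show ?thesis .
qed

lemma G3s: "v \<in> V \<Longrightarrow> (\<Sum>i<3. beta i v) < 2 * e0 v \<Longrightarrow> (\<Sum>i<3. \<Sum>u\<in>V. beta i u) < 4 * card Z"
proof -
  assume v: "v \<in> V" "(\<Sum>i<3. beta i v) < 2 * e0 v"
  have "(\<Sum>i<3. \<Sum>u\<in>V. beta i u) = (\<Sum>u\<in>V. \<Sum>i<3. beta i u)" by (rule sum.swap)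
  also have "\<dots> < (\<Sum>u\<in>V. 2 * e0 u)" using vertex_bound v finV by (intro sum_strict_mono_ex1) auto
  also have "\<dots> = 4 * card Z" using sum_e0 by (simp add: sum_distrib_left[symmetric])
  finally show ?thesis .
qed

abbreviation "TOT \<equiv> oddc 0 + oddc 1 + oddc 2"

lemma main_le: "2 * TOT \<le> 4 * card Z"
proof -
  have "2 * TOT = 2 * oddc 0 + 2 * oddc 1 + 2 * oddc 2" by simp
  also have "\<dots> \<le> (\<Sum>u\<in>V. beta 0 u) + (\<Sum>u\<in>V. beta 1 u) + (\<Sum>u\<in>V. beta 2 u)"
    using G1[of 0] G1[of 1] G1[of 2] G2[of 0] G2[of 1] G2[of 2] by simp
  also have "\<dots> = (\<Sum>i<3. \<Sum>u\<in>V. beta i u)" by (rule sum3[symmetric])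
  also have "\<dots> \<le> 4 * card Z" by (rule G3)
  finally show ?thesis .
qed

lemma main_strict_comp:
  assumes "i < 3" "C \<in> comps i" "aC i C < (\<Sum>u\<in>C. beta i u)"
  shows "2 * TOT < 4 * card Z"
proof -
  have s: "2 * oddc i < (\<Sum>u\<in>V. beta i u)" using G1[OF assms(1)] G2s[OF assms] by linarith
  have "2 * TOT = 2 * oddc 0 + 2 * oddc 1 + 2 * oddc 2" by simp
  also have "\<dots> < (\<Sum>u\<in>V. beta 0 u) + (\<Sum>u\<in>V. beta 1 u) + (\<Sum>u\<in>V. beta 2 u)"
    using G1[of 0] G1[of 1] G1[of 2] G2[of 0] G2[of 1] G2[of 2] s lt3[OF assms(1)] by auto
  also have "\<dots> = (\<Sum>i<3. \<Sum>u\<in>V. beta i u)" by (rule sum3[symmetric])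
  also have "\<dots> \<le> 4 * card Z" by (rule G3)
  finally show ?thesis .
qed

lemma main_strict_vertex:
  assumes "v \<in> V" "(\<Sum>i<3. beta i v) < 2 * e0 v"
  shows "2 * TOT < 4 * card Z"
proof -
  have "2 * TOT = 2 * oddc 0 + 2 * oddc 1 + 2 * oddc 2" by simp
  also have "\<dots> \<le> (\<Sum>u\<in>V. beta 0 u) + (\<Sum>u\<in>V. beta 1 u) + (\<Sum>u\<in>V. beta 2 u)"
    using G1[of 0] G1[of 1] G1[of 2] G2[of 0] G2[of 1] G2[of 2] by simp
  also have "\<dots> = (\<Sum>i<3. \<Sum>u\<in>V. beta i u)" by (rule sum3[symmetric])
  also have "\<dots> < 4 * card Z" by (rule G3s[OF assms])
  finally show ?thesis .
qed

lemma eq_no_triple: "TOT = 2 * card Z \<Longrightarrow> \<forall>w\<in>V. \<not> triple w"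
proof (intro ballI notI)
  fix w assume eq: "TOT = 2 * card Z" and w: "w \<in> V" "triple w"
  from triple_strict[OF w] have "2 * TOT < 4 * card Z"
    using main_strict_comp main_strict_vertex w(1) by blast
  thus False using eq by simp
qed

lemma eq_no_double:
  assumes eq: "TOT = 2 * card Z" and ij: "i < 3" "j < 3" "i \<noteq> j"
    and u: "u \<in> V" "w \<in> V" "u \<noteq> w" "m i u = m j u" "m i w = m j w"
    and r: "reach ends (E - Mf i) u w"
  shows False
proof -
  have nt: "\<forall>w\<in>V. \<not> triple w" using eq_no_triple[OF eq] .
  define C where "C = cls V ends (E - Mf i) u"
  have C: "C \<in> comps i" unfolding C_def using cls_comp[OF u(1)] .
  have uC: "u \<in> C" unfolding C_def using cls_self[OF u(1)] .
  have wC: "w \<in> C" unfolding C_def cls_def using u(2) r by simp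
  have "2 * TOT < 4 * card Z" using main_strict_comp[OF ij(1) C double_strict[OF nt ij C uC wC u(3-5)]] .
  thus False using eq by simp
qed

end



context G3 begin

abbreviation "Ec \<equiv> core_edges E M1 M2 M3"

lemma mu_eq: "mult3 M1 M2 M3 e = (if e \<in> Mf 0 then 1 else 0) + (if e \<in> Mf 1 then 1 else 0) + (if e \<in> Mf 2 then 1 else 0)"
  unfolding mult3_def Mf_def by simp

lemma Ec_iff: "e \<in> Ec \<longleftrightarrow> e \<in> E \<and> (mult3 M1 M2 M3 e = 0 \<or> mult3 M1 M2 M3 e = 2 \<or> mult3 M1 M2 M3 e = 3)"
  unfolding core_edges_def Ei_def by auto

lemma Ec_sub: "Ec \<subseteq> E" using Ec_iff by blast

lemma Z_Ec: "Z \<subseteq> Ec" using Z_eq unfolding core_edges_def by blast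

lemma mM_eq: "e \<in> Mf i \<Longrightarrow> e \<in> Mf j \<Longrightarrow> w \<in> V \<Longrightarrow> w \<in># ends e \<Longrightarrow> m i w = m j w"
  using m_props(3) by metis

lemma mult_cases: "(if e \<in> Mf 0 then 1 else 0) + (if e \<in> Mf 1 then 1 else 0) + (if e \<in> Mf 2 then 1 else (0::nat)) \<ge> 2
   \<Longrightarrow> \<exists>a<3. \<exists>b<3. a \<noteq> b \<and> e \<in> Mf a \<and> e \<in> Mf b"
proof -
  assume h: "(if e \<in> Mf 0 then 1 else 0) + (if e \<in> Mf 1 then 1 else 0) + (if e \<in> Mf 2 then 1 else (0::nat)) \<ge> 2"
  show ?thesis
  proof (cases "e \<in> Mf 0 \<and> e \<in> Mf 1")
    case True thus ?thesis by (intro exI[of _ 0] conjI exI[of _ 1]) auto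
  next
    case F1: False
    show ?thesis
    proof (cases "e \<in> Mf 0 \<and> e \<in> Mf 2")
      case True thus ?thesis by (intro exI[of _ 0] conjI exI[of _ 2]) auto
    next
      case False
      hence "e \<in> Mf 1 \<and> e \<in> Mf 2" using h F1 by (auto split: if_splits)
      thus ?thesis by (intro exI[of _ 1] conjI exI[of _ 2]) auto
    qed
  qed
qed

lemma Ec_pair: "e \<in> Ec \<Longrightarrow> w \<in> V \<Longrightarrow> w \<in># ends e \<Longrightarrow> \<exists>a<3. \<exists>b<3. a \<noteq> b \<and> m a w = m b w"
proof -
  assume e: "e \<in> Ec" "w \<in> V" "w \<in># ends e"
  show ?thesis
  proof (cases "e \<in> Z")
    case True thus ?thesis using Z_pair e by blast
  next
    case False
    have eE: "e \<in> E" using e Ec_sub by blast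
    have "mult3 M1 M2 M3 e \<noteq> 0"
    proof
      assume "mult3 M1 M2 M3 e = 0"
      hence "e \<in> Ei E M1 M2 M3 0" unfolding Ei_def using eE by simp
      thus False using False Z_eq by simp
    qed
    hence "mult3 M1 M2 M3 e \<ge> 2" using e(1) Ec_iff by auto
    then obtain a b where ab: "a < 3" "b < 3" "a \<noteq> b" "e \<in> Mf a" "e \<in> Mf b"
      using mult_cases unfolding mu_eq by blast
    thus ?thesis using mM_eq[OF ab(4,5) e(2,3)] by blast
  qed
qed

lemma core_at:
  assumes w: "w \<in> V" "\<not> triple w" and ab: "a < 3" "b < 3" "a \<noteq> b" "m a w = m b w"
  shows "\<exists>g. g \<in> Z \<and> g \<noteq> m a w \<and> m a w \<notin> Z \<and> {e\<in>Ec. w \<in># ends e} = {m a w, g}"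
proof -
  define l where "l = 3 - a - b"
  have l: "l < 3" "a \<noteq> l" "b \<noteq> l" unfolding l_def using third[OF ab(1-3)] by auto
  have mab: "m a w \<in> Mf a" "m a w \<in> Mf b" using m_props(1)[OF w(1), of a] m_props(1)[OF w(1), of b] ab(4) by auto
  have ml: "m l w \<noteq> m a w"
  proof
    assume "m l w = m a w"
    hence "triple w" using triple_of[OF ab(1,2) l(1) ab(3) l(2,3) ab(4)] by simp
    thus False using w(2) by simp
  qed
  have set3: "{m 0 v, m 1 v, m 2 v} = {m a v, m l v}" if "m a v = m b v" for v
    using pair_enum[OF ab(1-3)] that unfolding l_def by auto
  have "card {m 0 w, m 1 w, m 2 w} = 2" unfolding set3[OF ab(4)] using ml by simp
  hence "e0 w = 1" using e0_card[OF w(1)] by simp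
  then obtain g where g: "{e\<in>Z. w \<in># ends e} = {g}" unfolding e0_def using card_1_singletonE by blast
  have gZ: "g \<in> Z" "w \<in># ends g" using g by auto
  have Zv: "inc w - {m a w, m l w} = {g}" using Zv_eq[OF w(1)] g set3[OF ab(4)] by simp
  have incw: "inc w = {m a w, m l w, g}"
  proof -
    have "{m a w, m l w} \<subseteq> inc w" using m_inc[OF w(1)] by auto
    thus ?thesis using Zv by blast
  qed
  have maZ: "m a w \<notin> Z" using Z_notM mab(1) by blast
  have mlZ: "m l w \<notin> Z" using Z_notM m_props(1)[OF w(1), of l] by blast
  have mlEc: "m l w \<notin> Ec"
  proof
    assume "m l w \<in> Ec"
    have "m l w \<notin> Mf a"
    proof assume "m l w \<in> Mf a"
      hence "m l w = m a w" using m_props(3)[OF w(1)] m_props(2)[OF w(1)] by blast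
      thus False using ml by simp qed
    moreover have "m l w \<notin> Mf b"
    proof assume "m l w \<in> Mf b"
      hence "m l w = m b w" using m_props(3)[OF w(1)] m_props(2)[OF w(1)] by blast
      thus False using ml ab(4) by simp qed
    moreover have "m l w \<in> Mf l" using m_props(1)[OF w(1)] .
    ultimately have "mult3 M1 M2 M3 (m l w) = 1"
      unfolding mu_eq using pair_enum[OF ab(1-3)] unfolding l_def by auto
    thus False using \<open>m l w \<in> Ec\<close> Ec_iff by simp
  qed
  have maEc: "m a w \<in> Ec"
  proof -
    have "m a w \<notin> Mf l"
    proof assume "m a w \<in> Mf l"
      hence "m a w = m l w" using m_props(3)[OF w(1)] m_props(2)[OF w(1)] by blast
      thus False using ml by simp qed
    hence "mult3 M1 M2 M3 (m a w) = 2"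
      unfolding mu_eq using mab pair_enum[OF ab(1-3)] unfolding l_def by auto
    moreover have "m a w \<in> E" using mab Mf_sub by blast
    ultimately show ?thesis using Ec_iff by simp
  qed
  have "{e\<in>Ec. w \<in># ends e} = {m a w, g}"
  proof
    show "{e\<in>Ec. w \<in># ends e} \<subseteq> {m a w, g}"
    proof
      fix e assume "e \<in> {e\<in>Ec. w \<in># ends e}"
      hence "e \<in> inc w" "e \<in> Ec" unfolding inc_def using Ec_sub by auto
      thus "e \<in> {m a w, g}" using incw mlEc by auto
    qed
    show "{m a w, g} \<subseteq> {e\<in>Ec. w \<in># ends e}"
      using maEc gZ Z_Ec m_props(2)[OF w(1)] by auto
  qed
  moreover have "g \<noteq> m a w" using gZ maZ by blast
  ultimately show ?thesis using gZ maZ by blast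
qed

lemma core_deg2: "w \<in> V \<Longrightarrow> \<not> triple w \<Longrightarrow> e \<in> Ec \<Longrightarrow> w \<in># ends e \<Longrightarrow> card {e\<in>Ec. w \<in># ends e} = 2"
proof -
  assume h: "w \<in> V" "\<not> triple w" "e \<in> Ec" "w \<in># ends e"
  obtain a b where ab: "a < 3" "b < 3" "a \<noteq> b" "m a w = m b w" using Ec_pair[OF h(3,1,4)] by blast
  obtain g where "g \<in> Z" "g \<noteq> m a w" "{e\<in>Ec. w \<in># ends e} = {m a w, g}" using core_at[OF h(1,2) ab] by blast
  thus ?thesis by simp
qed

lemma core_alt: "w \<in> V \<Longrightarrow> \<not> triple w \<Longrightarrow> e \<in> Ec \<Longrightarrow> w \<in># ends e \<Longrightarrow> e' \<in> Ec \<Longrightarrow> w \<in># ends e' \<Longrightarrow> e \<noteq> e'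
  \<Longrightarrow> (e \<in> Z) \<noteq> (e' \<in> Z)"
proof -
  assume h: "w \<in> V" "\<not> triple w" "e \<in> Ec" "w \<in># ends e" "e' \<in> Ec" "w \<in># ends e'" "e \<noteq> e'"
  obtain a b where ab: "a < 3" "b < 3" "a \<noteq> b" "m a w = m b w" using Ec_pair[OF h(3,1,4)] by blast
  obtain g where g: "g \<in> Z" "g \<noteq> m a w" "m a w \<notin> Z" "{e\<in>Ec. w \<in># ends e} = {m a w, g}"
    using core_at[OF h(1,2) ab] by blast
  have "e \<in> {m a w, g}" "e' \<in> {m a w, g}" using h g(4) by blast+
  thus ?thesis using g h(7) by auto
qed

end



context G3 begin

definition K :: "'v \<Rightarrow> 'e set" where "K x = {e\<in>Ec. \<exists>u. u \<in># ends e \<and> reach ends Ec x u}"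

lemma reach_edge_Ec: "e \<in> Ec \<Longrightarrow> ends e = {#u, v#} \<Longrightarrow> reach ends Ec u v"
  unfolding reach_def by (rule r_into_rtranclp) blast

lemma reach_edge_K: "e \<in> K x \<Longrightarrow> ends e = {#u, v#} \<Longrightarrow> reach ends (K x) u v"
  unfolding reach_def by (rule r_into_rtranclp) blast

lemma K_sub: "K x \<subseteq> Ec" unfolding K_def by blast

lemma K_end: "e \<in> K x \<Longrightarrow> v \<in># ends e \<Longrightarrow> reach ends Ec x v"
proof -
  assume h: "e \<in> K x" "v \<in># ends e"
  then obtain u where u: "u \<in># ends e" "reach ends Ec x u" and eEc: "e \<in> Ec" unfolding K_def by blast
  have eE: "e \<in> E" using eEc Ec_sub by blast
  obtain y where y: "ends e = {#u, y#}" using other_end[OF eE u(1)] by blast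
  show ?thesis
  proof (cases "v = u")
    case True thus ?thesis using u by simp
  next
    case False hence "v = y" using h(2) y by simp
    thus ?thesis using reach_trans[OF u(2) reach_edge_Ec[OF eEc y]] by simp
  qed
qed

lemma K_reach: "reach ends Ec x y \<Longrightarrow> reach ends (K x) x y"
proof -
  assume "reach ends Ec x y"
  hence "(\<lambda>u v. \<exists>e\<in>Ec. ends e = {#u, v#})\<^sup>*\<^sup>* x y" unfolding reach_def .
  thus ?thesis
  proof (induction rule: rtranclp_induct)
    case base thus ?case by (rule reach_refl)
  next
    case (step y z)
    then obtain e where e: "e \<in> Ec" "ends e = {#y, z#}" by blast
    have "reach ends Ec x y" using step(1) unfolding reach_def .
    hence "e \<in> K x" unfolding K_def using e by auto
    thus ?case using reach_trans[OF step.IH reach_edge_K[OF _ e(2)]] by blast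
  qed
qed

lemma K_same: "reach ends Ec x y \<Longrightarrow> K x = K y"
proof -
  assume r: "reach ends Ec x y"
  have "\<And>u. reach ends Ec x u \<longleftrightarrow> reach ends Ec y u"
    using r reach_trans reach_sym by metis
  thus ?thesis unfolding K_def by simp
qed

lemma cyclic_core:
  assumes nt: "\<forall>w\<in>V. \<not> triple w"
  shows "cyclic ends Ec"
proof -
  let ?X = "verts_of ends Ec"
  let ?CC = "K ` ?X"
  have circ: "circuit ends (K x)" if x: "x \<in> ?X" for x
  proof -
    obtain e0' where e0': "e0' \<in> Ec" "x \<in># ends e0'" using x unfolding verts_of_def by auto
    have ne: "K x \<noteq> {}" using e0' reach_refl unfolding K_def by fast
    have fin: "finite (K x)" using K_sub Ec_sub finE finite_subset by metis
    have deg: "deg ends (K x) v = 2" if v: "v \<in> verts_of ends (K x)" for v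
    proof -
      obtain e where e: "e \<in> K x" "v \<in># ends e" using v unfolding verts_of_def by auto
      have eEc: "e \<in> Ec" using e K_sub by blast
      have vV: "v \<in> V" using endsV e eEc Ec_sub by blast
      have rv: "reach ends Ec x v" using K_end[OF e] .
      have "{e\<in>K x. v \<in># ends e} = {e\<in>Ec. v \<in># ends e}"
        using rv K_sub unfolding K_def by blast
      hence "deg ends (K x) v = card {e\<in>Ec. v \<in># ends e}"
        using deg_card[of "K x" v] K_sub Ec_sub by (metis subset_trans)
      also have "\<dots> = 2" using core_deg2[OF vV _ eEc e(2)] nt vV by blast
      finally show ?thesis .
    qed
    have conn: "reach ends (K x) u v" if uu: "u \<in> verts_of ends (K x)" and vv: "v \<in> verts_of ends (K x)" for u v
    proof -
      obtain e where e: "e \<in> K x" "u \<in># ends e" using uu unfolding verts_of_def by auto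
      obtain e' where e': "e' \<in> K x" "v \<in># ends e'" using vv unfolding verts_of_def by auto
      have "reach ends (K x) x u" using K_reach[OF K_end[OF e]] .
      moreover have "reach ends (K x) x v" using K_reach[OF K_end[OF e']] .
      ultimately show ?thesis using reach_sym reach_trans by metis
    qed
    show ?thesis unfolding circuit_def using ne fin deg conn by blast
  qed
  have U: "\<Union>?CC = Ec"
  proof
    show "\<Union>?CC \<subseteq> Ec" using K_sub by blast
    show "Ec \<subseteq> \<Union>?CC"
    proof
      fix e assume e: "e \<in> Ec"
      obtain a b where ab: "ends e = {#a, b#}" using ends_pair e Ec_sub by blast
      have aX: "a \<in> ?X" unfolding verts_of_def using ab by (intro UN_I[OF e]) simp
      have "e \<in> K a" unfolding K_def using e ab reach_refl by fastforce
      thus "e \<in> \<Union>?CC" using aX by blast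
    qed
  qed
  have D: "\<forall>C\<in>?CC. \<forall>D\<in>?CC. C \<noteq> D \<longrightarrow> verts_of ends C \<inter> verts_of ends D = {}"
  proof (intro ballI impI)
    fix C D assume C: "C \<in> ?CC" and D: "D \<in> ?CC" and CD: "C \<noteq> D"
    obtain x where x: "C = K x" using C by blast
    obtain y where y: "D = K y" using D by blast
    show "verts_of ends C \<inter> verts_of ends D = {}"
    proof (rule ccontr)
      assume "verts_of ends C \<inter> verts_of ends D \<noteq> {}"
      then obtain v where "v \<in> verts_of ends C" "v \<in> verts_of ends D" by blast
      then obtain e e' where e: "e \<in> K x" "v \<in># ends e" and e': "e' \<in> K y" "v \<in># ends e'"
        unfolding verts_of_def x y by auto
      have "reach ends Ec x v" "reach ends Ec y v" using K_end e e' by blast+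
      hence "reach ends Ec x y" using reach_sym reach_trans by metis
      hence "K x = K y" by (rule K_same)
      thus False using CD x y by simp
    qed
  qed
  have circ': "\<forall>C\<in>?CC. circuit ends C" using circ by blast
  show ?thesis unfolding cyclic_def by (rule exI[of _ ?CC]) (use circ' U D in simp)
qed

end



context G3 begin

lemma path_pair:
  assumes nt: "\<forall>w\<in>V. \<not> triple w"
    and ND: "\<And>i j u w. i < 3 \<Longrightarrow> j < 3 \<Longrightarrow> i \<noteq> j \<Longrightarrow> u \<in> V \<Longrightarrow> w \<in> V \<Longrightarrow> u \<noteq> w \<Longrightarrow>
              m i u = m j u \<Longrightarrow> m i w = m j w \<Longrightarrow> reach ends (E - Mf i) u w \<Longrightarrow> False"
    and P: "is_path ends Ec 5 vs es"
    and pq: "p < q" "q < 5"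
    and ij: "i < 3" "j < 3" "i \<noteq> j"
    and e: "es ! p \<in> Mf i" "es ! p \<in> Mf j" "es ! q \<in> Mf i" "es ! q \<in> Mf j"
  shows False
proof -
  have len: "length vs = 6" and dv: "distinct vs" using P unfolding is_path_def by auto
  have Et: "\<And>t. t < 5 \<Longrightarrow> es ! t \<in> Ec" using P unfolding is_path_def by auto
  have en: "\<And>t. t < 5 \<Longrightarrow> ends (es ! t) = {#vs ! t, vs ! Suc t#}" using P unfolding is_path_def by auto
  have EE: "\<And>t. t < 5 \<Longrightarrow> es ! t \<in> E" using Et Ec_sub by blast
  have vsV: "\<And>t. t < 5 \<Longrightarrow> vs ! t \<in> V \<and> vs ! Suc t \<in> V"
  proof -
    fix t :: nat assume t: "t < 5"
    have "set_mset (ends (es ! t)) \<subseteq> V" using endsV[OF EE[OF t]] .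
    thus "vs ! t \<in> V \<and> vs ! Suc t \<in> V" using en[OF t] by simp
  qed
  have dist: "\<And>s t. s \<le> 5 \<Longrightarrow> t \<le> 5 \<Longrightarrow> s \<noteq> t \<Longrightarrow> vs ! s \<noteq> vs ! t"
    using dv len by (simp add: nth_eq_iff_index_eq)
  have alt: "\<And>t. t < 4 \<Longrightarrow> (es ! t \<in> Z) \<noteq> (es ! Suc t \<in> Z)"
  proof -
    fix t :: nat assume t: "t < 4"
    have w: "vs ! Suc t \<in> V" using vsV[of t] t by simp
    have ne: "es ! t \<noteq> es ! Suc t"
    proof
      assume h: "es ! t = es ! Suc t"
      have "vs ! t \<in># ends (es ! Suc t)" using en[of t] t h by simp
      hence "vs ! t = vs ! Suc t \<or> vs ! t = vs ! Suc (Suc t)" using en[of "Suc t"] t by simp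
      thus False using dist[of t "Suc t"] dist[of t "Suc (Suc t)"] t by auto
    qed
    show "(es ! t \<in> Z) \<noteq> (es ! Suc t \<in> Z)"
      using core_alt[OF w _ Et[of t] _ Et[of "Suc t"] _ ne] nt w en[of t] en[of "Suc t"] t by simp
  qed
  have reachN: "\<And>t k. t < 5 \<Longrightarrow> es ! t \<notin> Mf k \<Longrightarrow> reach ends (E - Mf k) (vs ! t) (vs ! Suc t)"
    using EE en by (intro reach_edge) auto
  have reachZ: "\<And>t k. t < 5 \<Longrightarrow> es ! t \<in> Z \<Longrightarrow> reach ends (E - Mf k) (vs ! t) (vs ! Suc t)"
    using reachN Z_notM by blast
  have ends_m: "\<And>t. t < 5 \<Longrightarrow> es ! t \<in> Mf i \<Longrightarrow> es ! t \<in> Mf j \<Longrightarrow>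
      m i (vs ! t) = m j (vs ! t) \<and> m i (vs ! Suc t) = m j (vs ! Suc t)"
  proof -
    fix t :: nat assume t: "t < 5" and h: "es ! t \<in> Mf i" "es ! t \<in> Mf j"
    show "m i (vs ! t) = m j (vs ! t) \<and> m i (vs ! Suc t) = m j (vs ! Suc t)"
      using mM_eq[OF h] vsV[OF t] en[OF t] by simp
  qed
  have pZ: "es ! p \<notin> Z" using Z_notM e(1) by blast
  have qZ: "es ! q \<notin> Z" using Z_notM e(3) by blast
  have p1Z: "es ! Suc p \<in> Z" using alt[of p] pZ pq by auto
  have "q \<noteq> Suc p" using p1Z qZ by auto
  moreover have "q \<noteq> p + 3"
  proof
    assume q3: "q = p + 3"
    have "es ! Suc (Suc p) \<notin> Z" using alt[of "Suc p"] p1Z pq q3 by auto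
    hence "es ! Suc (Suc (Suc p)) \<in> Z" using alt[of "Suc (Suc p)"] pq q3 by auto
    thus False using qZ q3 by (simp add: numeral_3_eq_3)
  qed
  ultimately have cases: "q = Suc (Suc p) \<or> (p = 0 \<and> q = 4)" using pq by arith
  thus False
  proof
    assume q2: "q = Suc (Suc p)"
    have u: "m i (vs ! Suc p) = m j (vs ! Suc p)" using ends_m[of p] e pq by simp
    have w: "m i (vs ! q) = m j (vs ! q)" using ends_m[of q] e pq by simp
    have r: "reach ends (E - Mf i) (vs ! Suc p) (vs ! q)" using reachZ[of "Suc p" i] p1Z pq q2 by simp
    have "vs ! Suc p \<noteq> vs ! q" using dist[of "Suc p" q] pq q2 by simp
    moreover have "vs ! Suc p \<in> V" "vs ! q \<in> V" using vsV[of p] vsV[of q] pq by auto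
    ultimately show False using ND[OF ij _ _ _ u w r] by blast
  next
    assume pq4: "p = 0 \<and> q = 4"
    have z1: "es ! 1 \<in> Z" using p1Z pq4 by simp
    have z2: "es ! 2 \<notin> Z" using alt[of 1] z1 by (simp add: numeral_2_eq_2)
    have z3: "es ! 3 \<in> Z" using alt[of 2] z2 by (simp add: numeral_3_eq_3 numeral_2_eq_2)
    have u: "m i (vs ! 1) = m j (vs ! 1)" using ends_m[of 0] e pq4 by simp
    have w: "m i (vs ! 4) = m j (vs ! 4)" using ends_m[of 4] e pq4 by (simp add: numeral_eq_Suc)
    have V1: "vs ! 1 \<in> V" and V2: "vs ! 2 \<in> V" and V4: "vs ! 4 \<in> V"
      using vsV[of 1] vsV[of 2] vsV[of 3] by (auto simp: numeral_eq_Suc)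
    have d14: "vs ! 1 \<noteq> vs ! 4" and d12: "vs ! 1 \<noteq> vs ! 2" using dist by auto
    have r13: "reach ends (E - Mf k) (vs ! 1) (vs ! 2)" for k using reachZ[of 1 k] z1 by (simp add: numeral_2_eq_2)
    have r34: "reach ends (E - Mf k) (vs ! 3) (vs ! 4)" for k using reachZ[of 3 k] z3 by (simp add: numeral_eq_Suc)
    have r23: "es ! 2 \<notin> Mf k \<Longrightarrow> reach ends (E - Mf k) (vs ! 2) (vs ! 3)" for k
      using reachN[of 2 k] by (simp add: numeral_3_eq_3 numeral_2_eq_2)
    show False
    proof (cases "es ! 2 \<in> Mf i")
      case False
      have "reach ends (E - Mf i) (vs ! 1) (vs ! 4)"
        using reach_trans[OF r13 reach_trans[OF r23[OF False] r34]] .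
      thus False using ND[OF ij V1 V4 d14 u w] by blast
    next
      case Ti: True
      show False
      proof (cases "es ! 2 \<in> Mf j")
        case False
        have "reach ends (E - Mf j) (vs ! 1) (vs ! 4)"
          using reach_trans[OF r13 reach_trans[OF r23[OF False] r34]] .
        thus False using ND[OF ij(2,1) ij(3)[symmetric] V1 V4 d14 u[symmetric] w[symmetric]] by blast
      next
        case True
        have "m i (vs ! 2) = m j (vs ! 2)" using ends_m[of 2] Ti True by (simp add: numeral_eq_Suc)
        thus False using ND[OF ij V1 V2 d12 u _ r13] by blast
      qed
    qed
  qed
qed

end



context G3 begin

lemma oddc_eq: "odd_comps V E ends M1 = oddc 0" "odd_comps V E ends M2 = oddc 1" "odd_comps V E ends M3 = oddc 2"
  unfolding odd_comps_def oddc_def comps_def Mf_def by simp_all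

lemma main_loc:
  shows "odd_comps V E ends M1 + odd_comps V E ends M2 + odd_comps V E ends M3 \<le> 2 * card (Ei E M1 M2 M3 0)
         \<and> (odd_comps V E ends M1 + odd_comps V E ends M2 + odd_comps V E ends M3 = 2 * card (Ei E M1 M2 M3 0)
              \<longrightarrow> petersen_core E ends M1 M2 M3)"
proof (intro conjI impI)
  show "odd_comps V E ends M1 + odd_comps V E ends M2 + odd_comps V E ends M3 \<le> 2 * card (Ei E M1 M2 M3 0)"
    unfolding oddc_eq Z_eq using main_le by simp
next
  assume "odd_comps V E ends M1 + odd_comps V E ends M2 + odd_comps V E ends M3 = 2 * card (Ei E M1 M2 M3 0)"
  hence eq: "TOT = 2 * card Z" unfolding oddc_eq Z_eq .
  have nt: "\<forall>w\<in>V. \<not> triple w" using eq_no_triple[OF eq] .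
  have ND: "\<And>i j u w. i < 3 \<Longrightarrow> j < 3 \<Longrightarrow> i \<noteq> j \<Longrightarrow> u \<in> V \<Longrightarrow> w \<in> V \<Longrightarrow> u \<noteq> w \<Longrightarrow>
              m i u = m j u \<Longrightarrow> m i w = m j w \<Longrightarrow> reach ends (E - Mf i) u w \<Longrightarrow> False"
    using eq_no_double[OF eq] by blast
  have cyc: "cyclic ends Ec" using cyclic_core[OF nt] .
  have pth: "\<forall>vs es. is_path ends Ec 5 vs es \<longrightarrow>
         \<not> (\<exists>e1\<in>set es. \<exists>e2\<in>set es. e1 \<noteq> e2 \<and>
              (\<exists>(A, B)\<in>{(M1, M2), (M1, M3), (M2, M3)}. e1 \<in> A \<inter> B \<and> e2 \<in> A \<inter> B))"
  proof (intro allI impI notI)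
    fix vs es assume P: "is_path ends Ec 5 vs es"
      and ex: "\<exists>e1\<in>set es. \<exists>e2\<in>set es. e1 \<noteq> e2 \<and>
              (\<exists>(A, B)\<in>{(M1, M2), (M1, M3), (M2, M3)}. e1 \<in> A \<inter> B \<and> e2 \<in> A \<inter> B)"
    have les: "length es = 5" using P unfolding is_path_def by simp
    obtain e1 e2 A B where ee: "e1 \<in> set es" "e2 \<in> set es" "e1 \<noteq> e2"
      and AB: "(A, B) \<in> {(M1, M2), (M1, M3), (M2, M3)}" "e1 \<in> A \<inter> B" "e2 \<in> A \<inter> B"
      using ex by blast
    obtain i j where ij: "i < 3" "j < 3" "i \<noteq> j" "A = Mf i" "B = Mf j"
    proof -
      assume h: "\<And>i j. i < 3 \<Longrightarrow> j < 3 \<Longrightarrow> i \<noteq> j \<Longrightarrow> A = Mf i \<Longrightarrow> B = Mf j \<Longrightarrow> thesis"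
      have "(A = Mf 0 \<and> B = Mf 1) \<or> (A = Mf 0 \<and> B = Mf 2) \<or> (A = Mf 1 \<and> B = Mf 2)"
        using AB(1) unfolding Mf_def by auto
      thus thesis using h[of 0 1] h[of 0 2] h[of 1 2] by auto
    qed
    obtain p where p: "p < 5" "es ! p = e1" using ee(1) les by (auto simp: in_set_conv_nth)
    obtain q where q: "q < 5" "es ! q = e2" using ee(2) les by (auto simp: in_set_conv_nth)
    have "p \<noteq> q" using p q ee(3) by auto
    hence "p < q \<or> q < p" by arith
    thus False
    proof
      assume "p < q"
      thus False using path_pair[OF nt ND P _ q(1) ij(1-3)] AB ij p q by auto
    next
      assume "q < p"
      thus False using path_pair[OF nt ND P _ p(1) ij(1-3)] AB ij p q by auto
    qed
  qed
  show "petersen_core E ends M1 M2 M3" unfolding petersen_core_def Let_def using cyc pth by blast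
qed

end

theorem mainTheorem2:
  fixes V :: "'v set" and E :: "'e set" and ends :: "'e \<Rightarrow> 'v multiset"
    and M1 M2 M3 :: "'e set" and k :: nat
  assumes "cubic V E ends" and "bridgeless E ends"
    and "one_factor V E ends M1" and "one_factor V E ends M2" and "one_factor V E ends M3"
    and "k > 0" and "card (Ei E M1 M2 M3 0) = k"
  shows "odd_comps V E ends M1 + odd_comps V E ends M2 + odd_comps V E ends M3 \<le> 2 * k
         \<and> (odd_comps V E ends M1 + odd_comps V E ends M2 + odd_comps V E ends M3 = 2 * k
              \<longrightarrow> petersen_core E ends M1 M2 M3)"
proof -
  interpret G3 V E ends M1 M2 M3 using assms(1-5) by unfold_locales
  show ?thesis using main_loc assms(7) by simp
qed



end
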